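(* Let $\mathcal{G}$ be a tomographically local GPT and let $\widetilde{\xi}:\mathcal{G}\to\mathbf{SubStoch}$ be an ontological model of $\mathcal{G}$, with $\widetilde\xi(A)=\mathbb{R}^{\Lambda_A}$. Then for each system $A$ there is an invertible linear map $\chi_A:A\to\mathbb{R}^{\Lambda_A}$ such that: (i) for every process $T:A\to B$ of $\mathcal{G}$, $\widetilde{\xi}(T)=\chi_B\circ T\circ\chi_A^{-1}$; (ii) $\mathbf{1}_{\Lambda_A}\circ\chi_A=u_A$, where $\mathbf{1}_{\Lambda_A}$ is the all-ones covector on $\mathbb{R}^{\Lambda_A}$; (iii) for every pair of systems $A,B$, the linear map $X\mapsto\chi_B\circ X\circ\chi_A^{-1}$ (from linear maps $A\to B$ to linear maps $\mathbb{R}^{\Lambda_A}\to\mathbb{R}^{\Lambda_B}$) is positive: it maps the cone of nonnegative linear combinations of processes $A\to B$ of $\mathcal{G}$ into the cone of nonnegative linear combinations of substochastic maps $\mathbb{R}^{\Lambda_A}\to\mathbb{R}^{\Lambda_B}$.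
   Context: A process theory consists of systems (closed under a composition $A\otimes B$, with a trivial system $I$) and processes $T:A\to B$, closed under sequential composition $\circ$ and parallel composition $\otimes$ and containing identities; processes $I\to A$ are states, $A\to I$ effects, $I\to I$ scalars. $\mathbf{RLinear}$ is the process theory of finite-dimensional real vector spaces (composite $=$ tensor product, trivial system $\mathbb{R}$) and linear maps. $\mathbf{SubStoch}$ is the sub-process theory of $\mathbf{RLinear}$ whose systems are spaces $\mathbb{R}^\Lambda$ of real functions on finite sets $\Lambda$ (with $\mathbb{R}^{\Lambda}\otimes\mathbb{R}^{\Lambda'}=\mathbb{R}^{\Lambda\times\Lambda'}$, trivial system $\mathbb{R}$), and whose processes $\mathbb{R}^\Lambda\to\mathbb{R}^{\Lambda'}$ are the substochastic maps, i.e. linear maps $v\mapsto(\lambda'\mapsto\sum_\lambda f(\lambda'|\lambda)v(\lambda))$ with $f(\lambda'|\lambda)\in[0,1]$ and $\sum_{\lambda'}f(\lambda'|\lambda)\le1$ for all $\lambda$. The all-ones covector $\mathbf{1}_\Lambda$ is $v\mapsto\sum_\lambda v(\lambda)$. A tomographically local GPT is here a sub-process theory $\mathcal{G}$ of $\mathbf{RLinear}$ (closed under $\circ$, $\otimes$, containing identities) such that: each system $A$ is a finite-dimensional real vector space and composites are tensor products; the states of $A$ span $A$ and the effects on $A$ span $A^*$; every scalar lies in $[0,1]$; for each type the set of processes is closed under convex combinations; each system $A$ has a distinguished deterministic effect $u_A$ with $u_{A\otimes B}=u_A\otimes u_B$. An ontological model of $\mathcal{G}$ is a map $\widetilde\xi:\mathcal{G}\to\mathbf{SubStoch}$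 that is diagram-preserving (it assigns to each system $A$ a space $\mathbb{R}^{\Lambda_A}$, with $\widetilde\xi(A\otimes B)=\mathbb{R}^{\Lambda_A}\otimes\mathbb{R}^{\Lambda_B}$, $\widetilde\xi(I)=\mathbb{R}$, and to each process $T:A\to B$ a substochastic map $\widetilde\xi(T):\mathbb{R}^{\Lambda_A}\to\mathbb{R}^{\Lambda_B}$, preserving $\circ$, $\otimes$ and identities) and satisfies: (1) $\widetilde\xi(u_A)=\mathbf{1}_{\Lambda_A}$; (2) $\widetilde\xi(s)=s$ for every scalar $s$; (3) it preserves convex combinations of processes of the same type and coarse-grainings (sums) of effects whenever these relations hold in $\mathcal{G}$. *)

theory Defs
  imports "Jordan_Normal_Form.Matrix"
begin

text \<open>Linear maps R^m -> R^n are represented by real n x m matrices (JNF type real mat).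
  Composite systems are tensor products; R^a (x) R^b is identified with R^(a*b)
  via the Kronecker product below (index (i,i') |-> i * b + i').\<close>

definition kron :: "real mat \<Rightarrow> real mat \<Rightarrow> real mat" where
  "kron M N = mat (dim_row M * dim_row N) (dim_col M * dim_col N)
     (\<lambda>(i,j). M $$ (i div dim_row N, j div dim_col N) * N $$ (i mod dim_row N, j mod dim_col N))"

definition lin_comb :: "nat \<Rightarrow> nat \<Rightarrow> nat set \<Rightarrow> (nat \<Rightarrow> real) \<Rightarrow> (nat \<Rightarrow> real mat) \<Rightarrow> real mat" where
  "lin_comb r c K a M = mat r c (\<lambda>(i,j). \<Sum>k\<in>K. a k * M k $$ (i,j))"

definition convex_weights :: "nat set \<Rightarrow> (nat \<Rightarrow> real) \<Rightarrow> bool" where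
  "convex_weights K p \<longleftrightarrow> finite K \<and> (\<forall>k\<in>K. 0 \<le> p k) \<and> sum p K = 1"

definition cone_of :: "nat \<Rightarrow> nat \<Rightarrow> real mat set \<Rightarrow> real mat set" where
  "cone_of r c S = {lin_comb r c K a M | K a M. finite K \<and> (\<forall>k\<in>K. 0 \<le> a k \<and> M k \<in> S)}"

definition ones_row :: "nat \<Rightarrow> real mat" where
  "ones_row n = mat 1 n (\<lambda>_. 1)"

text \<open>Substochastic maps R^m -> R^n, i.e. R^Lambda -> R^Lambda' with |Lambda| = m, |Lambda'| = n
  (entry (i,j) is f(i|j)).\<close>
definition substoch :: "nat \<Rightarrow> nat \<Rightarrow> real mat \<Rightarrow> bool" where
  "substoch m n F \<longleftrightarrow> F \<in> carrier_mat n m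
     \<and> (\<forall>i<n. \<forall>j<m. 0 \<le> F $$ (i,j) \<and> F $$ (i,j) \<le> 1)
     \<and> (\<forall>j<m. (\<Sum>i<n. F $$ (i,j)) \<le> 1)"

text \<open>A tomographically local GPT: systems are labels of type 'sys, system A is the vector space
  R^(sdim A); tens is the composition of systems, I the trivial system; proc A B the set of
  processes A -> B (as matrices); u A the distinguished deterministic effect.\<close>
definition tl_gpt ::
  "('sys \<Rightarrow> nat) \<Rightarrow> ('sys \<Rightarrow> 'sys \<Rightarrow> 'sys) \<Rightarrow> 'sys \<Rightarrow> ('sys \<Rightarrow> 'sys \<Rightarrow> real mat set)
     \<Rightarrow> ('sys \<Rightarrow> real mat) \<Rightarrow> bool" where
  "tl_gpt sdim tens I proc u \<longleftrightarrow>
     \<comment> \<open>systems: strict monoidal structure, composites are tensor products\<close>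
     (\<forall>A B C. tens (tens A B) C = tens A (tens B C)) \<and>
     (\<forall>A. tens I A = A \<and> tens A I = A) \<and>
     sdim I = 1 \<and>
     (\<forall>A B. sdim (tens A B) = sdim A * sdim B) \<and>
     \<comment> \<open>processes are linear maps of the right type\<close>
     (\<forall>A B. proc A B \<subseteq> carrier_mat (sdim B) (sdim A)) \<and>
     \<comment> \<open>closure under sequential and parallel composition, identities\<close>
     (\<forall>A B C S T. S \<in> proc B C \<longrightarrow> T \<in> proc A B \<longrightarrow> S * T \<in> proc A C) \<and>
     (\<forall>A B A' B' T T'. T \<in> proc A B \<longrightarrow> T' \<in> proc A' B' \<longrightarrow>
         kron T T' \<in> proc (tens A A') (tens B B')) \<and>
     (\<forall>A. 1\<^sub>m (sdim A) \<in> proc A A) \<and>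
     \<comment> \<open>states span A, effects span A*\<close>
     (\<forall>A. \<forall>v \<in> carrier_mat (sdim A) 1. \<exists>K a s. finite K \<and> (\<forall>k\<in>K. s k \<in> proc I A)
          \<and> v = lin_comb (sdim A) 1 K a s) \<and>
     (\<forall>A. \<forall>w \<in> carrier_mat 1 (sdim A). \<exists>K a e. finite K \<and> (\<forall>k\<in>K. e k \<in> proc A I)
          \<and> w = lin_comb 1 (sdim A) K a e) \<and>
     \<comment> \<open>scalars lie in [0,1]\<close>
     (\<forall>s \<in> proc I I. 0 \<le> s $$ (0,0) \<and> s $$ (0,0) \<le> 1) \<and>
     \<comment> \<open>convexity\<close>
     (\<forall>A B K p T. convex_weights K p \<longrightarrow> (\<forall>k\<in>K. T k \<in> proc A B) \<longrightarrow>
         lin_comb (sdim B) (sdim A) K p T \<in> proc A B) \<and>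
     \<comment> \<open>deterministic effects\<close>
     (\<forall>A. u A \<in> proc A I) \<and>
     (\<forall>A B. u (tens A B) = kron (u A) (u B))"

text \<open>An ontological model: system A is sent to R^(Lambda_A), represented by R^(n A)
  with n A = |Lambda_A|; xi A B T is the image of the process T : A -> B.\<close>
definition ontological_model ::
  "('sys \<Rightarrow> nat) \<Rightarrow> ('sys \<Rightarrow> 'sys \<Rightarrow> 'sys) \<Rightarrow> 'sys \<Rightarrow> ('sys \<Rightarrow> 'sys \<Rightarrow> real mat set)
     \<Rightarrow> ('sys \<Rightarrow> real mat) \<Rightarrow> ('sys \<Rightarrow> nat) \<Rightarrow> ('sys \<Rightarrow> 'sys \<Rightarrow> real mat \<Rightarrow> real mat) \<Rightarrow> bool" where
  "ontological_model sdim tens I proc u n xi \<longleftrightarrow>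
     n I = 1 \<and>
     (\<forall>A B. n (tens A B) = n A * n B) \<and>
     (\<forall>A B T. T \<in> proc A B \<longrightarrow> substoch (n A) (n B) (xi A B T)) \<and>
     \<comment> \<open>diagram preservation\<close>
     (\<forall>A B C S T. S \<in> proc B C \<longrightarrow> T \<in> proc A B \<longrightarrow> xi A C (S * T) = xi B C S * xi A B T) \<and>
     (\<forall>A B A' B' T T'. T \<in> proc A B \<longrightarrow> T' \<in> proc A' B' \<longrightarrow>
         xi (tens A A') (tens B B') (kron T T') = kron (xi A B T) (xi A' B' T')) \<and>
     (\<forall>A. xi A A (1\<^sub>m (sdim A)) = 1\<^sub>m (n A)) \<and>
     \<comment> \<open>(1) deterministic effects go to the all-ones covector\<close>
     (\<forall>A. xi A I (u A) = ones_row (n A)) \<and>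
     \<comment> \<open>(2) scalars are preserved\<close>
     (\<forall>s \<in> proc I I. xi I I s = s) \<and>
     \<comment> \<open>(3) convex combinations and coarse-grainings of effects are preserved\<close>
     (\<forall>A B K p T S. convex_weights K p \<longrightarrow> (\<forall>k\<in>K. T k \<in> proc A B) \<longrightarrow> S \<in> proc A B \<longrightarrow>
         S = lin_comb (sdim B) (sdim A) K p T \<longrightarrow>
         xi A B S = lin_comb (n B) (n A) K p (\<lambda>k. xi A B (T k))) \<and>
     (\<forall>A K e E. finite K \<longrightarrow> (\<forall>k\<in>K. e k \<in> proc A I) \<longrightarrow> E \<in> proc A I \<longrightarrow>
         E = lin_comb 1 (sdim A) K (\<lambda>_. 1) e \<longrightarrow>
         xi A I E = lin_comb 1 (n A) K (\<lambda>_. 1) (\<lambda>k. xi A I (e k)))"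

end

theory Submission
  imports Defs
begin


definition gc :: "nat \<Rightarrow> nat \<Rightarrow> 'a set \<Rightarrow> ('a \<Rightarrow> real) \<Rightarrow> ('a \<Rightarrow> real mat) \<Rightarrow> real mat" where
  "gc r c X w G = mat r c (\<lambda>(i,j). \<Sum>x\<in>X. w x * G x $$ (i,j))"

lemma gc_carrier[simp]: "gc r c X w G \<in> carrier_mat r c"
  by (simp add: gc_def)
lemma gc_dims[simp]: "dim_row (gc r c X w G) = r" "dim_col (gc r c X w G) = c"
  by (simp_all add: gc_def)
lemma gc_index[simp]: "i < r \<Longrightarrow> j < c \<Longrightarrow> gc r c X w G $$ (i,j) = (\<Sum>x\<in>X. w x * G x $$ (i,j))"
  by (simp add: gc_def)
lemma lin_comb_gc: "lin_comb r c K a M = gc r c K a M"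
  by (simp add: lin_comb_def gc_def)

lemma mult_entry:
  assumes "A \<in> carrier_mat m p" "B \<in> carrier_mat p q" "i < m" "j < q"
  shows "(A * B) $$ (i,j) = (\<Sum>k<p. A $$ (i,k) * B $$ (k,j))"
  using assms by (auto simp: scalar_prod_def intro!: sum.cong)

lemma gc_cong: "(\<And>x. x \<in> X \<Longrightarrow> w x = w' x) \<Longrightarrow> (\<And>x. x \<in> X \<Longrightarrow> G x = G' x) \<Longrightarrow>
   gc r c X w G = gc r c X w' G'"
  unfolding gc_def by (auto intro!: sum.cong)

lemma gc_mult_left:
  assumes "P \<in> carrier_mat p r" "\<And>x. x \<in> X \<Longrightarrow> G x \<in> carrier_mat r c"
  shows "P * gc r c X w G = gc p c X w (\<lambda>x. P * G x)"
proof (rule eq_matI)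
  fix i j assume ij: "i < dim_row (gc p c X w (\<lambda>x. P * G x))" "j < dim_col (gc p c X w (\<lambda>x. P * G x))"
  have "(P * gc r c X w G) $$ (i,j) = (\<Sum>k<r. P $$ (i,k) * (\<Sum>x\<in>X. w x * G x $$ (k,j)))"
    using ij assms by (simp add: mult_entry[of P p r _ c] del: index_mult_mat)
  also have "\<dots> = (\<Sum>x\<in>X. w x * (\<Sum>k<r. P $$ (i,k) * G x $$ (k,j)))"
    by (simp add: sum_distrib_left mult_ac sum.swap[of _ X])
  also have "\<dots> = gc p c X w (\<lambda>x. P * G x) $$ (i,j)"
    using ij assms by (auto simp: mult_entry[of P p r _ c] intro!: sum.cong)
  finally show "(P * gc r c X w G) $$ (i,j) = gc p c X w (\<lambda>x. P * G x) $$ (i,j)" .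
qed (use assms in auto)

lemma gc_mult_right:
  assumes "R \<in> carrier_mat c q" "\<And>x. x \<in> X \<Longrightarrow> G x \<in> carrier_mat r c"
  shows "gc r c X w G * R = gc r q X w (\<lambda>x. G x * R)"
proof (rule eq_matI)
  fix i j assume ij: "i < dim_row (gc r q X w (\<lambda>x. G x * R))" "j < dim_col (gc r q X w (\<lambda>x. G x * R))"
  have "(gc r c X w G * R) $$ (i,j) = (\<Sum>k<c. (\<Sum>x\<in>X. w x * G x $$ (i,k)) * R $$ (k,j))"
    using ij assms by (simp add: mult_entry[of _ r c R q] del: index_mult_mat)
  also have "\<dots> = (\<Sum>x\<in>X. w x * (\<Sum>k<c. G x $$ (i,k) * R $$ (k,j)))"
    by (simp add: sum_distrib_left sum_distrib_right mult_ac sum.swap[of _ X])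
  also have "\<dots> = gc r q X w (\<lambda>x. G x * R) $$ (i,j)"
    using ij assms by (auto simp: mult_entry[of _ r c R q] intro!: sum.cong)
  finally show "(gc r c X w G * R) $$ (i,j) = gc r q X w (\<lambda>x. G x * R) $$ (i,j)" .
qed (use assms in auto)

lemma gc_reindex_nat:
  assumes "finite X"
  obtains h where "bij_betw h {0..<card X} X"
    "\<And>r c w G. gc r c X w G = lin_comb r c {0..<card X} (w \<circ> h) (G \<circ> h)"
proof -
  obtain h where h: "bij_betw h {0..<card X} X" using ex_bij_betw_nat_finite[OF assms] by blast
  have "gc r c X w G = lin_comb r c {0..<card X} (w \<circ> h) (G \<circ> h)" for r c w G
    unfolding lin_comb_gc gc_def
    by (rule cong[of "mat r c"], simp, rule ext, simp add: case_prod_beta sum.reindex_bij_betw[OF h, symmetric])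
  with h that show ?thesis by blast
qed


definition scal :: "real \<Rightarrow> real mat" where "scal q = mat 1 1 (\<lambda>_. q)"

locale om =
  fixes sdim :: "'sys \<Rightarrow> nat" and tens :: "'sys \<Rightarrow> 'sys \<Rightarrow> 'sys" and I :: 'sys
    and proc :: "'sys \<Rightarrow> 'sys \<Rightarrow> real mat set" and u :: "'sys \<Rightarrow> real mat"
    and n :: "'sys \<Rightarrow> nat" and xi :: "'sys \<Rightarrow> 'sys \<Rightarrow> real mat \<Rightarrow> real mat"
  assumes gpt: "tl_gpt sdim tens I proc u"
    and omod: "ontological_model sdim tens I proc u n xi"
begin

lemma tensI: "tens A I = A" "tens I A = A"
  using gpt[unfolded tl_gpt_def, THEN conjunct2, THEN conjunct1] by blast+
lemma sdimI: "sdim I = 1"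
  using gpt[unfolded tl_gpt_def, THEN conjunct2, THEN conjunct2, THEN conjunct1] by blast
lemma proc_sub: "proc A B \<subseteq> carrier_mat (sdim B) (sdim A)"
  using gpt[unfolded tl_gpt_def, THEN conjunct2, THEN conjunct2, THEN conjunct2, THEN conjunct2, THEN conjunct1] by blast
lemma proc_carrier: "T \<in> proc A B \<Longrightarrow> T \<in> carrier_mat (sdim B) (sdim A)"
  using proc_sub by blast
lemma proc_comp: "S \<in> proc B C \<Longrightarrow> T \<in> proc A B \<Longrightarrow> S * T \<in> proc A C"
  using gpt[unfolded tl_gpt_def, THEN conjunct2, THEN conjunct2, THEN conjunct2, THEN conjunct2, THEN conjunct2, THEN conjunct1] by blast
lemma proc_kron: "T \<in> proc A B \<Longrightarrow> T' \<in> proc A' B' \<Longrightarrow> kron T T' \<in> proc (tens A A') (tens B B')"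
  using gpt[unfolded tl_gpt_def, THEN conjunct2, THEN conjunct2, THEN conjunct2, THEN conjunct2, THEN conjunct2, THEN conjunct2, THEN conjunct1] by blast
lemma proc_id: "1\<^sub>m (sdim A) \<in> proc A A"
  using gpt[unfolded tl_gpt_def, THEN conjunct2, THEN conjunct2, THEN conjunct2, THEN conjunct2, THEN conjunct2, THEN conjunct2, THEN conjunct2, THEN conjunct1] by blast
lemma states_span: "v \<in> carrier_mat (sdim A) 1 \<Longrightarrow> \<exists>K a s. finite K \<and> (\<forall>k\<in>K. s k \<in> proc I A)
          \<and> v = lin_comb (sdim A) 1 K a s"
  using gpt[unfolded tl_gpt_def, THEN conjunct2, THEN conjunct2, THEN conjunct2, THEN conjunct2, THEN conjunct2, THEN conjunct2, THEN conjunct2, THEN conjunct2, THEN conjunct1] by blast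
lemma effects_span: "w \<in> carrier_mat 1 (sdim A) \<Longrightarrow> \<exists>K a e. finite K \<and> (\<forall>k\<in>K. e k \<in> proc A I)
          \<and> w = lin_comb 1 (sdim A) K a e"
  using gpt[unfolded tl_gpt_def, THEN conjunct2, THEN conjunct2, THEN conjunct2, THEN conjunct2, THEN conjunct2, THEN conjunct2, THEN conjunct2, THEN conjunct2, THEN conjunct2, THEN conjunct1] by blast
lemma scal_range: "s \<in> proc I I \<Longrightarrow> 0 \<le> s $$ (0,0) \<and> s $$ (0,0) \<le> 1"
  using gpt[unfolded tl_gpt_def, THEN conjunct2, THEN conjunct2, THEN conjunct2, THEN conjunct2, THEN conjunct2, THEN conjunct2, THEN conjunct2, THEN conjunct2, THEN conjunct2, THEN conjunct2, THEN conjunct1] by blast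
lemma proc_convex: "convex_weights K p \<Longrightarrow> (\<forall>k\<in>K. T k \<in> proc A B) \<Longrightarrow>
         lin_comb (sdim B) (sdim A) K p T \<in> proc A B"
  using gpt[unfolded tl_gpt_def, THEN conjunct2, THEN conjunct2, THEN conjunct2, THEN conjunct2, THEN conjunct2, THEN conjunct2, THEN conjunct2, THEN conjunct2, THEN conjunct2, THEN conjunct2, THEN conjunct2, THEN conjunct1] by blast
lemma u_proc: "u A \<in> proc A I"
  using gpt[unfolded tl_gpt_def, THEN conjunct2, THEN conjunct2, THEN conjunct2, THEN conjunct2, THEN conjunct2, THEN conjunct2, THEN conjunct2, THEN conjunct2, THEN conjunct2, THEN conjunct2, THEN conjunct2, THEN conjunct2, THEN conjunct1] by blast

lemma nI: "n I = 1"
  using omod[unfolded ontological_model_def, THEN conjunct1] by blast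
lemma xi_substoch: "T \<in> proc A B \<Longrightarrow> substoch (n A) (n B) (xi A B T)"
  using omod[unfolded ontological_model_def, THEN conjunct2, THEN conjunct2, THEN conjunct1] by blast
lemma xi_carrier: "T \<in> proc A B \<Longrightarrow> xi A B T \<in> carrier_mat (n B) (n A)"
  using xi_substoch unfolding substoch_def by blast
lemma xi_comp: "S \<in> proc B C \<Longrightarrow> T \<in> proc A B \<Longrightarrow> xi A C (S * T) = xi B C S * xi A B T"
  using omod[unfolded ontological_model_def, THEN conjunct2, THEN conjunct2, THEN conjunct2, THEN conjunct1] by blast
lemma xi_kron: "T \<in> proc A B \<Longrightarrow> T' \<in> proc A' B' \<Longrightarrow>
         xi (tens A A') (tens B B') (kron T T') = kron (xi A B T) (xi A' B' T')"
  using omod[unfolded ontological_model_def, THEN conjunct2, THEN conjunct2, THEN conjunct2, THEN conjunct2, THEN conjunct1] by blast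
lemma xi_id: "xi A A (1\<^sub>m (sdim A)) = 1\<^sub>m (n A)"
  using omod[unfolded ontological_model_def, THEN conjunct2, THEN conjunct2, THEN conjunct2, THEN conjunct2, THEN conjunct2, THEN conjunct1] by blast
lemma xi_u: "xi A I (u A) = ones_row (n A)"
  using omod[unfolded ontological_model_def, THEN conjunct2, THEN conjunct2, THEN conjunct2, THEN conjunct2, THEN conjunct2, THEN conjunct2, THEN conjunct1] by blast
lemma xi_scal: "s \<in> proc I I \<Longrightarrow> xi I I s = s"
  using omod[unfolded ontological_model_def, THEN conjunct2, THEN conjunct2, THEN conjunct2, THEN conjunct2, THEN conjunct2, THEN conjunct2, THEN conjunct2, THEN conjunct1] by blast
lemma xi_convex: "convex_weights K p \<Longrightarrow> (\<forall>k\<in>K. T k \<in> proc A B) \<Longrightarrow> S \<in> proc A B \<Longrightarrow>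
         S = lin_comb (sdim B) (sdim A) K p T \<Longrightarrow>
         xi A B S = lin_comb (n B) (n A) K p (\<lambda>k. xi A B (T k))"
  using omod[unfolded ontological_model_def, THEN conjunct2, THEN conjunct2, THEN conjunct2, THEN conjunct2, THEN conjunct2, THEN conjunct2, THEN conjunct2, THEN conjunct2, THEN conjunct1] by blast
lemma xi_coarse: "finite K \<Longrightarrow> (\<forall>k\<in>K. e k \<in> proc A I) \<Longrightarrow> E \<in> proc A I \<Longrightarrow>
         E = lin_comb 1 (sdim A) K (\<lambda>_. 1) e \<Longrightarrow>
         xi A I E = lin_comb 1 (n A) K (\<lambda>_. 1) (\<lambda>k. xi A I (e k))"
  using omod[unfolded ontological_model_def, THEN conjunct2, THEN conjunct2, THEN conjunct2, THEN conjunct2, THEN conjunct2, THEN conjunct2, THEN conjunct2, THEN conjunct2, THEN conjunct2] by blast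

lemma conv:
  assumes X: "finite X" and w: "\<And>x. x \<in> X \<Longrightarrow> 0 \<le> w x" "sum w X = 1"
    and G: "\<And>x. x \<in> X \<Longrightarrow> G x \<in> proc A B"
  shows "gc (sdim B) (sdim A) X w G \<in> proc A B \<and>
         xi A B (gc (sdim B) (sdim A) X w G) = gc (n B) (n A) X w (\<lambda>x. xi A B (G x))"
proof -
  obtain h where h: "bij_betw h {0..<card X} X"
    and eq: "\<And>r c w G. gc r c X w G = lin_comb r c {0..<card X} (w \<circ> h) (G \<circ> h)"
    using gc_reindex_nat[OF X] by blast
  have hx: "h k \<in> X" if "k \<in> {0..<card X}" for k using h that by (auto simp: bij_betw_def)
  have cw: "convex_weights {0..<card X} (w \<circ> h)"
    unfolding convex_weights_def using w hx sum.reindex_bij_betw[OF h, of w] by auto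
  have T: "\<forall>k\<in>{0..<card X}. (G \<circ> h) k \<in> proc A B" using G hx by auto
  have mem: "gc (sdim B) (sdim A) X w G \<in> proc A B"
    unfolding eq by (rule proc_convex[OF cw T])
  show ?thesis using mem xi_convex[OF cw T mem] unfolding eq by (simp add: comp_def)
qed

lemma gc_scale_div:
  assumes "k \<noteq> 0" "gc r c X (\<lambda>x. a x / k) G = gc r c X (\<lambda>x. b x / k) H"
  shows "gc r c X a G = gc r c X b H"
proof (rule eq_matI)
  fix i j assume ij: "i < dim_row (gc r c X b H)" "j < dim_col (gc r c X b H)"
  have "gc r c X (\<lambda>x. a x / k) G $$ (i,j) = gc r c X (\<lambda>x. b x / k) H $$ (i,j)" using assms by simp
  hence "(\<Sum>x\<in>X. a x * G x $$ (i,j)) / k = (\<Sum>x\<in>X. b x * H x $$ (i,j)) / k"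
    using ij by (simp add: sum_divide_distrib)
  thus "gc r c X a G $$ (i,j) = gc r c X b H $$ (i,j)" using ij assms(1) by simp
qed auto

lemma gc_scale_eq:
  assumes "gc r c X a G = gc r c X b H"
  shows "gc r c X (\<lambda>x. a x / k) G = gc r c X (\<lambda>x. b x / k) H"
proof (rule eq_matI)
  fix i j assume ij: "i < dim_row (gc r c X (\<lambda>x. b x / k) H)" "j < dim_col (gc r c X (\<lambda>x. b x / k) H)"
  have "gc r c X a G $$ (i,j) = gc r c X b H $$ (i,j)" using assms by simp
  hence "(\<Sum>x\<in>X. a x * G x $$ (i,j)) / k = (\<Sum>x\<in>X. b x * H x $$ (i,j)) / k"
    using ij by simp
  thus "gc r c X (\<lambda>x. a x / k) G $$ (i,j) = gc r c X (\<lambda>x. b x / k) H $$ (i,j)"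
    using ij by (simp add: sum_divide_distrib)
qed auto

lemma eq_conv:
  assumes X: "finite X" and a: "\<And>x. x \<in> X \<Longrightarrow> 0 \<le> a x" and b: "\<And>x. x \<in> X \<Longrightarrow> 0 \<le> b x"
    and T: "\<And>x. x \<in> X \<Longrightarrow> T x \<in> proc A B" and U: "\<And>x. x \<in> X \<Longrightarrow> U x \<in> proc A B"
    and s: "sum a X = sum b X" "sum a X > 0"
    and e: "gc (sdim B) (sdim A) X a T = gc (sdim B) (sdim A) X b U"
  shows "gc (n B) (n A) X a (\<lambda>x. xi A B (T x)) = gc (n B) (n A) X b (\<lambda>x. xi A B (U x))"
proof -
  define g where "g = sum a X"
  have g: "g > 0" using s(2) unfolding g_def .
  have wa: "sum (\<lambda>x. a x / g) X = 1"
  proof -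
    have "sum (\<lambda>x. a x / g) X = sum a X / g" by (rule sum_divide_distrib[symmetric])
    thus ?thesis using g unfolding g_def by simp
  qed
  have wb: "sum (\<lambda>x. b x / g) X = 1"
  proof -
    have "sum (\<lambda>x. b x / g) X = sum b X / g" by (rule sum_divide_distrib[symmetric])
    thus ?thesis using g s unfolding g_def by simp
  qed
  have ca: "gc (sdim B) (sdim A) X (\<lambda>x. a x / g) T = gc (sdim B) (sdim A) X (\<lambda>x. b x / g) U"
    using e by (rule gc_scale_eq)
  have pa: "\<And>x. x \<in> X \<Longrightarrow> 0 \<le> a x / g" using a g by (simp add: divide_nonneg_pos)
  have pb: "\<And>x. x \<in> X \<Longrightarrow> 0 \<le> b x / g" using b g by (simp add: divide_nonneg_pos)
  have c1: "xi A B (gc (sdim B) (sdim A) X (\<lambda>x. a x / g) T) = gc (n B) (n A) X (\<lambda>x. a x / g) (\<lambda>x. xi A B (T x))"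
    using conv[of X "\<lambda>x. a x / g" T A B, OF X pa wa T] by (rule conjunct2)
  have c2: "xi A B (gc (sdim B) (sdim A) X (\<lambda>x. b x / g) U) = gc (n B) (n A) X (\<lambda>x. b x / g) (\<lambda>x. xi A B (U x))"
    using conv[of X "\<lambda>x. b x / g" U A B, OF X pb wb U] by (rule conjunct2)
  have fin: "gc (n B) (n A) X (\<lambda>x. a x / g) (\<lambda>x. xi A B (T x)) = gc (n B) (n A) X (\<lambda>x. b x / g) (\<lambda>x. xi A B (U x))"
    unfolding c1[symmetric] c2[symmetric] ca by (rule refl)
  have gne: "g \<noteq> 0" using g by simp
  show ?thesis by (rule gc_scale_div[OF gne fin])
qed


lemma scal_carrier[simp]: "scal q \<in> carrier_mat 1 1" by (simp add: scal_def)
lemma scal_dims[simp]: "dim_row (scal q) = 1" "dim_col (scal q) = 1" by (simp_all add: scal_def)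
lemma scal_index[simp]: "scal q $$ (0,0) = q" by (simp add: scal_def)

lemma kron_scal: "T \<in> carrier_mat r c \<Longrightarrow> kron T (scal q) = q \<cdot>\<^sub>m T"
  by (rule eq_matI) (auto simp: kron_def scal_def)
lemma kron_scal_scal: "kron (scal x) (scal y) = scal (x * y)"
  by (rule eq_matI) (auto simp: kron_def scal_def)
lemma one_scal: "1\<^sub>m 1 = scal 1"
  by (rule eq_matI) (auto simp: scal_def)
lemma carrier11_scal: "p \<in> carrier_mat 1 1 \<Longrightarrow> p = scal (p $$ (0,0))"
  by (rule eq_matI) (auto simp: scal_def)

lemma scale_proc:
  assumes q: "scal q \<in> proc I I" and T: "T \<in> proc A B"
  shows "q \<cdot>\<^sub>m T \<in> proc A B \<and> xi A B (q \<cdot>\<^sub>m T) = q \<cdot>\<^sub>m xi A B T"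
proof -
  have k: "kron T (scal q) \<in> proc A B" using proc_kron[OF T q] by (simp add: tensI)
  have e: "kron T (scal q) = q \<cdot>\<^sub>m T" using kron_scal[OF proc_carrier[OF T]] .
  have "xi A B (kron T (scal q)) = kron (xi A B T) (xi I I (scal q))"
    using xi_kron[OF T q] by (simp add: tensI)
  also have "\<dots> = q \<cdot>\<^sub>m xi A B T" using xi_scal[OF q] kron_scal[OF xi_carrier[OF T]] by simp
  finally show ?thesis using k e by simp
qed

lemma scal_pow:
  assumes "scal p \<in> proc I I" shows "scal (p ^ k) \<in> proc I I"
proof (induction k)
  case 0
  have "scal (p^0) = 1\<^sub>m (sdim I)" by (simp only: power_0 sdimI one_scal)
  then show ?case using proc_id[of I] by simp
next
  case (Suc k)
  have "kron (scal p) (scal (p^k)) \<in> proc I I" using proc_kron[OF assms Suc] by (simp add: tensI)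
  then show ?case by (simp add: kron_scal_scal)
qed

lemma scal1_proc: "scal 1 \<in> proc I I"
proof -
  have "scal 1 = 1\<^sub>m (sdim I)" by (simp only: sdimI one_scal)
  then show ?thesis using proc_id[of I] by simp
qed

lemma all_scal:
  assumes p: "p \<in> proc I I" "p \<noteq> 1\<^sub>m 1" and q: "0 < q" "q \<le> 1"
  shows "scal q \<in> proc I I"
proof -
  define r where "r = p $$ (0,0)"
  have pc: "p = scal r" unfolding r_def by (rule carrier11_scal) (use proc_carrier[OF p(1)] sdimI in simp)
  have r01: "0 \<le> r" "r \<le> 1" using scal_range[OF p(1)] r_def by auto
  have "r \<noteq> 1" using p(2) pc one_scal by auto
  hence r1: "r < 1" using r01 by simp
  obtain k where k: "r ^ k < q" using real_arch_pow_inv[OF q(1) r1] by blast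
  define t where "t = (q - r^k) / (1 - r^k)"
  have rk: "0 \<le> r^k" "r^k < 1" using r01 k q by auto
  have t01: "0 \<le> t" "t \<le> 1" using rk k q by (simp_all add: t_def divide_le_eq)
  have td: "t * (1 - r^k) = q - r^k" using rk by (simp add: t_def)
  have "t + (1 - t) * r^k = r^k + t * (1 - r^k)" by (simp add: algebra_simps)
  hence tq: "t + (1 - t) * r^k = q" using td by simp
  define w where "w = (\<lambda>i::nat. if i = 0 then t else 1 - t)"
  define G where "G = (\<lambda>i::nat. if i = 0 then scal 1 else scal (r^k))"
  have cw: "convex_weights {0,1} w" using t01 by (auto simp: convex_weights_def w_def)
  have G: "\<forall>k\<in>{0,1}. G k \<in> proc I I"
    using scal_pow[of r k] p(1) pc scal1_proc by (auto simp: G_def)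
  have "lin_comb (sdim I) (sdim I) {0,1} w G \<in> proc I I" by (rule proc_convex[OF cw G])
  moreover have "lin_comb (sdim I) (sdim I) {0,1} w G = scal q"
    using tq by (intro eq_matI) (auto simp: lin_comb_def sdimI w_def G_def scal_def)
  ultimately show ?thesis by simp
qed

end


lemma gc_smult:
  assumes "q \<noteq> 0" "\<And>x. x \<in> X \<Longrightarrow> G x \<in> carrier_mat r c"
  shows "gc r c X (\<lambda>x. a x / q) (\<lambda>x. q \<cdot>\<^sub>m G x) = gc r c X a G"
proof (rule eq_matI)
  fix i j assume ij: "i < dim_row (gc r c X a G)" "j < dim_col (gc r c X a G)"
  have "a x / q * (q \<cdot>\<^sub>m G x) $$ (i,j) = a x * G x $$ (i,j)" if "x \<in> X" for x
  proof -
    have "G x \<in> carrier_mat r c" using assms(2) that .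
    hence "(q \<cdot>\<^sub>m G x) $$ (i,j) = q * G x $$ (i,j)" using ij by simp
    thus ?thesis using assms(1) by simp
  qed
  then show "gc r c X (\<lambda>x. a x / q) (\<lambda>x. q \<cdot>\<^sub>m G x) $$ (i,j) = gc r c X a G $$ (i,j)"
    using ij by (simp del: index_smult_mat)
qed auto

lemma sum_opt:
  assumes "finite X"
  shows "sum f (insert None (Some ` X)) = f None + (\<Sum>x\<in>X. f (Some x))"
proof -
  have "None \<notin> Some ` X" by auto
  hence "sum f (insert None (Some ` X)) = f None + sum f (Some ` X)" using assms by simp
  also have "sum f (Some ` X) = (\<Sum>x\<in>X. f (Some x))" by (simp add: sum.reindex)
  finally show ?thesis .
qed

context om begin

lemma eq_allscal_dir:
  assumes allq: "\<forall>q. 0 < q \<and> q \<le> 1 \<longrightarrow> scal q \<in> proc I I"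
    and X: "finite X" and a: "\<And>x. x \<in> X \<Longrightarrow> 0 \<le> a x" and b: "\<And>x. x \<in> X \<Longrightarrow> 0 \<le> b x"
    and T: "\<And>x. x \<in> X \<Longrightarrow> T x \<in> proc A B" and U: "\<And>x. x \<in> X \<Longrightarrow> U x \<in> proc A B"
    and s: "sum a X > 0" "sum b X > 0" "sum a X \<le> sum b X"
    and e: "gc (sdim B) (sdim A) X a T = gc (sdim B) (sdim A) X b U"
  shows "gc (n B) (n A) X a (\<lambda>x. xi A B (T x)) = gc (n B) (n A) X b (\<lambda>x. xi A B (U x))"
proof -
  define q where "q = sum a X / sum b X"
  have q: "0 < q" "q \<le> 1" using s by (auto simp: q_def)
  have sq: "scal q \<in> proc I I" using allq q by blast
  have qne: "q \<noteq> 0" using q by simp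
  have T': "\<And>x. x \<in> X \<Longrightarrow> q \<cdot>\<^sub>m T x \<in> proc A B" using scale_proc[OF sq] T by blast
  have xT': "\<And>x. x \<in> X \<Longrightarrow> xi A B (q \<cdot>\<^sub>m T x) = q \<cdot>\<^sub>m xi A B (T x)" using scale_proc[OF sq] T by blast
  have a': "\<And>x. x \<in> X \<Longrightarrow> 0 \<le> a x / q" using a q by simp
  have e1: "gc (sdim B) (sdim A) X (\<lambda>x. a x / q) (\<lambda>x. q \<cdot>\<^sub>m T x) = gc (sdim B) (sdim A) X a T"
    by (rule gc_smult[OF qne]) (use T proc_carrier in blast)
  have "sum (\<lambda>x. a x / q) X = sum a X / q" by (rule sum_divide_distrib[symmetric])
  also have "\<dots> = sum b X" using s by (simp add: q_def)
  finally have sa: "sum (\<lambda>x. a x / q) X = sum b X" .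
  have "gc (n B) (n A) X (\<lambda>x. a x / q) (\<lambda>x. xi A B (q \<cdot>\<^sub>m T x)) = gc (n B) (n A) X b (\<lambda>x. xi A B (U x))"
    by (rule eq_conv[OF X a' b T' U]) (use sa s e1 e in auto)
  moreover have "gc (n B) (n A) X (\<lambda>x. a x / q) (\<lambda>x. xi A B (q \<cdot>\<^sub>m T x)) = gc (n B) (n A) X (\<lambda>x. a x / q) (\<lambda>x. q \<cdot>\<^sub>m xi A B (T x))"
    by (rule gc_cong) (simp_all add: xT')
  moreover have "gc (n B) (n A) X (\<lambda>x. a x / q) (\<lambda>x. q \<cdot>\<^sub>m xi A B (T x)) = gc (n B) (n A) X a (\<lambda>x. xi A B (T x))"
    by (rule gc_smult[OF qne]) (use T xi_carrier in blast)
  ultimately show ?thesis by simp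
qed

lemma eq_allscal:
  assumes allq: "\<forall>q. 0 < q \<and> q \<le> 1 \<longrightarrow> scal q \<in> proc I I"
    and X: "finite X" and a: "\<And>x. x \<in> X \<Longrightarrow> 0 \<le> a x" and b: "\<And>x. x \<in> X \<Longrightarrow> 0 \<le> b x"
    and T: "\<And>x. x \<in> X \<Longrightarrow> T x \<in> proc A B" and U: "\<And>x. x \<in> X \<Longrightarrow> U x \<in> proc A B"
    and s: "sum a X > 0" "sum b X > 0"
    and e: "gc (sdim B) (sdim A) X a T = gc (sdim B) (sdim A) X b U"
  shows "gc (n B) (n A) X a (\<lambda>x. xi A B (T x)) = gc (n B) (n A) X b (\<lambda>x. xi A B (U x))"
proof (cases "sum a X \<le> sum b X")
  case True
  show ?thesis by (rule eq_allscal_dir[OF allq X a b T U s True e])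
next
  case False
  hence "sum b X \<le> sum a X" by simp
  from eq_allscal_dir[OF allq X b a U T s(2) s(1) this e[symmetric]] show ?thesis by simp
qed

lemma lin:
  assumes X: "finite X" and G: "\<And>x. x \<in> X \<Longrightarrow> G x \<in> proc A B" and Q: "Q \<in> proc A B"
    and Qe: "Q = gc (sdim B) (sdim A) X c G"
    and cond: "sum c X = 1 \<or> (\<forall>q. 0 < q \<and> q \<le> 1 \<longrightarrow> scal q \<in> proc I I)"
  shows "xi A B Q = gc (n B) (n A) X c (\<lambda>x. xi A B (G x))"
proof -
  define Y where "Y = insert None (Some ` X)"
  define T where "T = (\<lambda>y. case y of None \<Rightarrow> Q | Some x \<Rightarrow> G x)"
  define a where "a = (\<lambda>y. case y of None \<Rightarrow> 2 | Some x \<Rightarrow> max 0 (- c x))"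
  define b where "b = (\<lambda>y. case y of None \<Rightarrow> 1 | Some x \<Rightarrow> max 0 (c x))"
  have Y: "finite Y" using X by (simp add: Y_def)
  have aY: "\<And>y. y \<in> Y \<Longrightarrow> 0 \<le> (a y::real)" by (auto simp: a_def Y_def)
  have bY: "\<And>y. y \<in> Y \<Longrightarrow> 0 \<le> (b y::real)" by (auto simp: b_def Y_def)
  have TY: "\<And>y. y \<in> Y \<Longrightarrow> T y \<in> proc A B" using G Q by (auto simp: T_def Y_def)
  have sumY: "\<And>f. sum f Y = f None + (\<Sum>x\<in>X. f (Some x))" unfolding Y_def by (rule sum_opt[OF X])
  have split: "\<And>x. (c x::real) = max 0 (c x) - max 0 (- c x)" by auto
  have sa: "sum a Y = 2 + (\<Sum>x\<in>X. max 0 (- c x))" by (simp add: sumY a_def)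
  have sb: "sum b Y = 1 + (\<Sum>x\<in>X. max 0 (c x))" by (simp add: sumY b_def)
  have nn1: "(\<Sum>x\<in>X. max 0 (- c x)) \<ge> 0" by (rule sum_nonneg) auto
  have nn2: "(\<Sum>x\<in>X. max 0 (c x)) \<ge> 0" by (rule sum_nonneg) auto
  have csum: "sum c X = (\<Sum>x\<in>X. max 0 (c x)) - (\<Sum>x\<in>X. max 0 (- c x))"
    by (subst sum_subtractf[symmetric]) (rule sum.cong, auto)
  have lincomb: "\<And>F::'a \<Rightarrow> real. (\<Sum>x\<in>X. c x * F x) = (\<Sum>x\<in>X. max 0 (c x) * F x) - (\<Sum>x\<in>X. max 0 (- c x) * F x)"
    by (subst sum_subtractf[symmetric]) (rule sum.cong, auto simp: max_def algebra_simps)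
  have eY: "gc (sdim B) (sdim A) Y a T = gc (sdim B) (sdim A) Y b T"
  proof (rule eq_matI)
    fix i j assume ij: "i < dim_row (gc (sdim B) (sdim A) Y b T)" "j < dim_col (gc (sdim B) (sdim A) Y b T)"
    have Qij: "Q $$ (i,j) = (\<Sum>x\<in>X. c x * G x $$ (i,j))" using ij Qe by simp
    show "gc (sdim B) (sdim A) Y a T $$ (i,j) = gc (sdim B) (sdim A) Y b T $$ (i,j)"
      using ij Qij lincomb[of "\<lambda>x. G x $$ (i,j)"] by (simp add: sumY a_def b_def T_def)
  qed auto
  have xeq: "gc (n B) (n A) Y a (\<lambda>y. xi A B (T y)) = gc (n B) (n A) Y b (\<lambda>y. xi A B (T y))"
    using cond
  proof
    assume "sum c X = 1"
    hence "sum a Y = sum b Y" using sa sb csum by simp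
    thus ?thesis by (intro eq_conv[OF Y aY bY TY TY _ _ eY]) (use sa nn1 in auto)
  next
    assume "\<forall>q. 0 < q \<and> q \<le> 1 \<longrightarrow> scal q \<in> proc I I"
    thus ?thesis by (intro eq_allscal[OF _ Y aY bY TY TY _ _ eY]) (use sa sb nn1 nn2 in auto)
  qed
  show ?thesis
  proof (rule eq_matI)
    fix i j assume ij: "i < dim_row (gc (n B) (n A) X c (\<lambda>x. xi A B (G x)))" "j < dim_col (gc (n B) (n A) X c (\<lambda>x. xi A B (G x)))"
    have "gc (n B) (n A) Y a (\<lambda>y. xi A B (T y)) $$ (i,j) = gc (n B) (n A) Y b (\<lambda>y. xi A B (T y)) $$ (i,j)"
      using xeq by simp
    hence "2 * xi A B Q $$ (i,j) + (\<Sum>x\<in>X. max 0 (- c x) * xi A B (G x) $$ (i,j))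
         = xi A B Q $$ (i,j) + (\<Sum>x\<in>X. max 0 (c x) * xi A B (G x) $$ (i,j))"
      using ij by (simp add: sumY a_def b_def T_def)
    then show "xi A B Q $$ (i,j) = gc (n B) (n A) X c (\<lambda>x. xi A B (G x)) $$ (i,j)"
      using ij lincomb[of "\<lambda>x. xi A B (G x) $$ (i,j)"] by simp
  qed (use xi_carrier[OF Q] in auto)
qed

end


definition ucol :: "nat \<Rightarrow> nat \<Rightarrow> real mat" where
  "ucol d i = mat d 1 (\<lambda>(l,_). if l = i then 1 else 0)"
definition urow :: "nat \<Rightarrow> nat \<Rightarrow> real mat" where
  "urow d i = mat 1 d (\<lambda>(_,l). if l = i then 1 else 0)"

definition chiM :: "nat \<Rightarrow> nat \<Rightarrow> real mat set \<Rightarrow> (nat \<Rightarrow> real mat \<Rightarrow> real) \<Rightarrow> (real mat \<Rightarrow> real mat) \<Rightarrow> real mat" where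
  "chiM nn d S al X = mat nn d (\<lambda>(r,i). gc nn 1 S (al i) X $$ (r,0))"
definition chiI :: "nat \<Rightarrow> nat \<Rightarrow> real mat set \<Rightarrow> (nat \<Rightarrow> real mat \<Rightarrow> real) \<Rightarrow> (real mat \<Rightarrow> real mat) \<Rightarrow> real mat" where
  "chiI nn d F be Y = mat d nn (\<lambda>(j,r). gc 1 nn F (be j) Y $$ (0,r))"

lemma chiM_carrier[simp]: "chiM nn d S al X \<in> carrier_mat nn d" by (simp add: chiM_def)
lemma chiI_carrier[simp]: "chiI nn d F be Y \<in> carrier_mat d nn" by (simp add: chiI_def)

lemma chiM_dims[simp]: "dim_row (chiM nn d S al X) = nn" "dim_col (chiM nn d S al X) = d"
  by (simp_all add: chiM_def)
lemma chiI_dims[simp]: "dim_row (chiI nn d F be Y) = d" "dim_col (chiI nn d F be Y) = nn"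
  by (simp_all add: chiI_def)

lemma regroup_gc:
  assumes K: "finite K" and S: "finite S" and sub: "s ` K \<subseteq> S"
  shows "gc r c S (\<lambda>m. \<Sum>k\<in>{k\<in>K. s k = m}. a k) (\<lambda>m. m) = gc r c K a s"
proof (rule eq_matI)
  fix i j assume ij: "i < dim_row (gc r c K a s)" "j < dim_col (gc r c K a s)"
  have "(\<Sum>m\<in>S. (\<Sum>k\<in>{k\<in>K. s k = m}. a k) * m $$ (i,j)) = (\<Sum>m\<in>S. (\<Sum>k\<in>{k\<in>K. s k = m}. a k * s k $$ (i,j)))"
    by (rule sum.cong) (auto simp: sum_distrib_right)
  also have "\<dots> = (\<Sum>k\<in>K. a k * s k $$ (i,j))"
    using sum.group[OF K S sub, of "\<lambda>k. a k * s k $$ (i,j)"] by simp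
  finally show "gc r c S (\<lambda>m. \<Sum>k\<in>{k\<in>K. s k = m}. a k) (\<lambda>m. m) $$ (i,j) = gc r c K a s $$ (i,j)"
    using ij by simp
qed auto

lemma bil:
  assumes G: "\<And>f. f \<in> F \<Longrightarrow> G f \<in> carrier_mat 1 p" and M: "M \<in> carrier_mat p q"
    and H: "\<And>s. s \<in> S \<Longrightarrow> H s \<in> carrier_mat q 1"
  shows "(gc 1 p F be G * M * gc q 1 S al H) $$ (0,0) = (\<Sum>f\<in>F. be f * (\<Sum>s\<in>S. al s * (G f * M * H s) $$ (0,0)))"
proof -
  have "gc 1 p F be G * M = gc 1 q F be (\<lambda>f. G f * M)" by (rule gc_mult_right[OF M G])
  moreover have "gc 1 q F be (\<lambda>f. G f * M) * gc q 1 S al H = gc 1 1 F be (\<lambda>f. G f * M * gc q 1 S al H)"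
    by (rule gc_mult_right) (simp, meson G M mult_carrier_mat)
  moreover have "G f * M * gc q 1 S al H = gc 1 1 S al (\<lambda>s. G f * M * H s)" if "f \<in> F" for f
    by (rule gc_mult_left) (meson G M that mult_carrier_mat, use H in auto)
  ultimately have "gc 1 p F be G * M * gc q 1 S al H = gc 1 1 F be (\<lambda>f. gc 1 1 S al (\<lambda>s. G f * M * H s))"
    by (simp cong: gc_cong)
  then show ?thesis by simp
qed

lemma sandwich:
  assumes M: "M \<in> carrier_mat nb na" and j: "j < db" and i: "i < da"
  shows "(chiI nb db F be Y * M * chiM na da S al X) $$ (j,i) = (gc 1 nb F (be j) Y * M * gc na 1 S (al i) X) $$ (0,0)"
  using M i j by (simp add: chiI_def chiM_def scalar_prod_def)

lemma row_chiM:
  assumes P: "P \<in> carrier_mat 1 na" and i: "i < da"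
  shows "(P * chiM na da S al X) $$ (0,i) = (P * gc na 1 S (al i) X) $$ (0,0)"
  using P i by (simp add: chiM_def scalar_prod_def)

lemma ifm: "(if P then 1 else 0) * (t::real) = (if P then t else 0)" "t * (if P then 1 else 0) = (if P then t else 0)"
  by simp_all

lemma urow_ucol:
  assumes T: "T \<in> carrier_mat db da" and j: "j < db" and i: "i < da"
  shows "(urow db j * T * ucol da i) $$ (0,0) = T $$ (j,i)"
proof -
  have "(urow db j * T * ucol da i) $$ (0,0) = (\<Sum>l'<da. (\<Sum>l<db. (if l = j then 1 else 0) * T $$ (l,l')) * (if l' = i then 1 else 0))"
    using T by (simp add: urow_def ucol_def scalar_prod_def atLeast0LessThan)
  also have "\<dots> = T $$ (j,i)" using i j by (simp add: ifm sum.delta)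
  finally show ?thesis .
qed

lemma sum_prod3:
  fixes x :: "'a \<Rightarrow> real" and y :: "'b \<Rightarrow> real"
  shows "(\<Sum>(s,f)\<in>S\<times>F. (\<Sum>i<d. al i s * be i f) * (x s * y f)) = (\<Sum>i<d. (\<Sum>s\<in>S. al i s * x s) * (\<Sum>f\<in>F. be i f * y f))"
proof -
  have "(\<Sum>(s,f)\<in>S\<times>F. (\<Sum>i<d. al i s * be i f) * (x s * y f)) = (\<Sum>s\<in>S. \<Sum>f\<in>F. (\<Sum>i<d. al i s * be i f) * (x s * y f))"
    by (simp only: sum.cartesian_product)
  also have "\<dots> = (\<Sum>s\<in>S. \<Sum>f\<in>F. \<Sum>i<d. (al i s * x s) * (be i f * y f))"
    by (intro sum.cong refl) (simp add: sum_distrib_left mult_ac)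
  also have "\<dots> = (\<Sum>s\<in>S. \<Sum>i<d. \<Sum>f\<in>F. (al i s * x s) * (be i f * y f))"
    by (intro sum.cong refl) (rule sum.swap)
  also have "\<dots> = (\<Sum>i<d. \<Sum>s\<in>S. \<Sum>f\<in>F. (al i s * x s) * (be i f * y f))"
    by (rule sum.swap)
  also have "\<dots> = (\<Sum>i<d. (\<Sum>s\<in>S. al i s * x s) * (\<Sum>f\<in>F. be i f * y f))"
    by (simp only: sum_product)
  finally show ?thesis .
qed


lemma span_set:
  assumes "\<forall>i<(d::nat). \<exists>K a s. finite K \<and> (\<forall>k\<in>K. s k \<in> P) \<and> V i = lin_comb r c K a s"
  shows "\<exists>S al. finite S \<and> S \<subseteq> P \<and> (\<forall>i<d. gc r c S (al i) (\<lambda>m. m) = V i)"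
proof -
  have "\<forall>i\<in>{..<d}. \<exists>t. finite (fst t) \<and> (\<forall>k\<in>fst t. snd (snd t) k \<in> P) \<and> V i = lin_comb r c (fst t) (fst (snd t)) (snd (snd t))"
  proof
    fix i assume "i \<in> {..<d}"
    then obtain K a s where "finite K" "\<forall>k\<in>K. s k \<in> P" "V i = lin_comb r c K a s" using assms by auto
    then show "\<exists>t. finite (fst t) \<and> (\<forall>k\<in>fst t. snd (snd t) k \<in> P) \<and> V i = lin_comb r c (fst t) (fst (snd t)) (snd (snd t))"
      by (intro exI[of _ "(K,a,s)"]) simp
  qed
  from bchoice[OF this] obtain t where t: "\<forall>i\<in>{..<d}. finite (fst (t i)) \<and> (\<forall>k\<in>fst (t i). snd (snd (t i)) k \<in> P) \<and> V i = lin_comb r c (fst (t i)) (fst (snd (t i))) (snd (snd (t i)))"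
    by blast
  define Kf where "Kf i = fst (t i)" for i
  define af where "af i = fst (snd (t i))" for i
  define sf where "sf i = snd (snd (t i))" for i
  define S where "S = (\<Union>i\<in>{..<d}. sf i ` Kf i)"
  define al where "al i m = (\<Sum>k\<in>{k\<in>Kf i. sf i k = m}. af i k)" for i m
  have fK: "\<And>i. i < d \<Longrightarrow> finite (Kf i)" using t by (simp add: Kf_def)
  have fin: "finite S" unfolding S_def by (rule finite_UN_I) (simp, rule finite_imageI, simp add: fK)
  have sub: "S \<subseteq> P" using t by (auto simp: S_def Kf_def sf_def)
  have "gc r c S (al i) (\<lambda>m. m) = V i" if i: "i < d" for i
  proof -
    have "gc r c S (al i) (\<lambda>m. m) = gc r c (Kf i) (af i) (sf i)"
      unfolding al_def by (rule regroup_gc) (use t i fin in \<open>auto simp: Kf_def S_def\<close>)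
    also have "\<dots> = V i" using t i by (simp add: Kf_def af_def sf_def lin_comb_gc)
    finally show ?thesis .
  qed
  with fin sub show ?thesis by blast
qed

context om begin

lemma spanning:
  "\<exists>S al F be. finite S \<and> S \<subseteq> proc I A \<and> (\<forall>i<sdim A. gc (sdim A) 1 S (al i) (\<lambda>m. m) = ucol (sdim A) i) \<and>
     finite F \<and> F \<subseteq> proc A I \<and> (\<forall>j<sdim A. gc 1 (sdim A) F (be j) (\<lambda>m. m) = urow (sdim A) j)"
proof -
  have "\<forall>i<sdim A. \<exists>K a s. finite K \<and> (\<forall>k\<in>K. s k \<in> proc I A) \<and> ucol (sdim A) i = lin_comb (sdim A) 1 K a s"
    using states_span by (auto simp: ucol_def)
  from span_set[OF this] obtain S al where S: "finite S \<and> S \<subseteq> proc I A \<and> (\<forall>i<sdim A. gc (sdim A) 1 S (al i) (\<lambda>m. m) = ucol (sdim A) i)"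
    by blast
  have "\<forall>i<sdim A. \<exists>K a s. finite K \<and> (\<forall>k\<in>K. s k \<in> proc A I) \<and> urow (sdim A) i = lin_comb 1 (sdim A) K a s"
    using effects_span by (auto simp: urow_def)
  from span_set[OF this] obtain F be where F: "finite F \<and> F \<subseteq> proc A I \<and> (\<forall>i<sdim A. gc 1 (sdim A) F (be i) (\<lambda>m. m) = urow (sdim A) i)"
    by blast
  from S F show ?thesis by blast
qed

lemma scal_eq:
  assumes f: "f \<in> proc B I" and T: "T \<in> proc A B" and s: "s \<in> proc I A"
  shows "xi B I f * xi A B T * xi I A s = f * T * s"
proof -
  have fT: "f * T \<in> proc A I" by (rule proc_comp[OF f T])
  have fTs: "f * T * s \<in> proc I I" by (rule proc_comp[OF fT s])
  have "xi I I (f * T * s) = xi A I (f * T) * xi I A s" by (rule xi_comp[OF fT s])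
  also have "\<dots> = xi B I f * xi A B T * xi I A s" by (simp add: xi_comp[OF f T])
  finally show ?thesis using xi_scal[OF fTs] by simp
qed

lemma xi_dzero:
  assumes "sdim A = 0" shows "n A = 0"
proof (rule ccontr)
  assume nz: "n A \<noteq> 0"
  have u: "u A \<in> proc A I" by (rule u_proc)
  have ue: "u A = lin_comb 1 (sdim A) {} (\<lambda>_. 1) (\<lambda>_. u A)"
    using proc_carrier[OF u] assms sdimI by (intro eq_matI) (auto simp: lin_comb_def)
  have "xi A I (u A) = lin_comb 1 (n A) {} (\<lambda>_. 1) (\<lambda>k. xi A I ((\<lambda>_. u A) k))"
    by (rule xi_coarse[OF _ _ u ue]) auto
  hence "ones_row (n A) = lin_comb 1 (n A) {} (\<lambda>_. 1) (\<lambda>_. xi A I (u A))" using xi_u by simp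
  hence "ones_row (n A) $$ (0,0) = lin_comb 1 (n A) {} (\<lambda>_. 1) (\<lambda>_. xi A I (u A)) $$ (0,0)" by simp
  thus False using nz by (simp add: ones_row_def lin_comb_def)
qed

end

locale omd = om sdim tens I proc u n xi
  for sdim :: "'sys \<Rightarrow> nat" and tens :: "'sys \<Rightarrow> 'sys \<Rightarrow> 'sys" and I :: 'sys
    and proc :: "'sys \<Rightarrow> 'sys \<Rightarrow> real mat set" and u :: "'sys \<Rightarrow> real mat"
    and n :: "'sys \<Rightarrow> nat" and xi :: "'sys \<Rightarrow> 'sys \<Rightarrow> real mat \<Rightarrow> real mat" +
  fixes SS :: "'sys \<Rightarrow> real mat set" and al :: "'sys \<Rightarrow> nat \<Rightarrow> real mat \<Rightarrow> real"
    and FF :: "'sys \<Rightarrow> real mat set" and be :: "'sys \<Rightarrow> nat \<Rightarrow> real mat \<Rightarrow> real"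
  assumes data: "\<And>A. finite (SS A) \<and> SS A \<subseteq> proc I A \<and> (\<forall>i<sdim A. gc (sdim A) 1 (SS A) (al A i) (\<lambda>m. m) = ucol (sdim A) i) \<and>
     finite (FF A) \<and> FF A \<subseteq> proc A I \<and> (\<forall>j<sdim A. gc 1 (sdim A) (FF A) (be A j) (\<lambda>m. m) = urow (sdim A) j)"
begin

abbreviation chi where "chi A \<equiv> chiM (n A) (sdim A) (SS A) (al A) (xi I A)"
abbreviation chi_inv where "chi_inv A \<equiv> chiI (n A) (sdim A) (FF A) (be A) (xi A I)"

lemma chi_carrier[simp]: "chi A \<in> carrier_mat (n A) (sdim A)" by simp
lemma chi_inv_carrier[simp]: "chi_inv A \<in> carrier_mat (sdim A) (n A)" by simp

lemma chi_dims[simp]: "dim_row (chi A) = n A" "dim_col (chi A) = sdim A"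
  "dim_row (chi_inv A) = sdim A" "dim_col (chi_inv A) = n A"
  by (simp_all add: chiM_def chiI_def)

lemma SS_fin: "finite (SS A)" using data by blast
lemma FF_fin: "finite (FF A)" using data by blast
lemma SS_proc: "s \<in> SS A \<Longrightarrow> s \<in> proc I A" using data by blast
lemma FF_proc: "f \<in> FF A \<Longrightarrow> f \<in> proc A I" using data by blast
lemma SS_span: "i < sdim A \<Longrightarrow> gc (sdim A) 1 (SS A) (al A i) (\<lambda>m. m) = ucol (sdim A) i" using data by blast
lemma FF_span: "j < sdim A \<Longrightarrow> gc 1 (sdim A) (FF A) (be A j) (\<lambda>m. m) = urow (sdim A) j" using data by blast

lemma SS_carrier: "s \<in> SS A \<Longrightarrow> s \<in> carrier_mat (sdim A) 1" using proc_carrier[OF SS_proc] sdimI by metis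
lemma FF_carrier: "f \<in> FF A \<Longrightarrow> f \<in> carrier_mat 1 (sdim A)" using proc_carrier[OF FF_proc] sdimI by metis
lemma xSS_carrier: "s \<in> SS A \<Longrightarrow> xi I A s \<in> carrier_mat (n A) 1" using xi_carrier[OF SS_proc] nI by metis
lemma xFF_carrier: "f \<in> FF A \<Longrightarrow> xi A I f \<in> carrier_mat 1 (n A)" using xi_carrier[OF FF_proc] nI by metis

lemma sandwich_T:
  assumes T: "T \<in> proc A B"
  shows "chi_inv B * xi A B T * chi A = T"
proof (rule eq_matI)
  fix j i assume ji: "j < dim_row T" "i < dim_col T"
  have j: "j < sdim B" and i: "i < sdim A" using ji proc_carrier[OF T] by auto
  have xT: "xi A B T \<in> carrier_mat (n B) (n A)" by (rule xi_carrier[OF T])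
  have Tc: "T \<in> carrier_mat (sdim B) (sdim A)" by (rule proc_carrier[OF T])
  have "(chi_inv B * xi A B T * chi A) $$ (j,i) =
     (gc 1 (n B) (FF B) (be B j) (xi B I) * xi A B T * gc (n A) 1 (SS A) (al A i) (xi I A)) $$ (0,0)"
    by (rule sandwich[OF xT j i])
  also have "\<dots> = (\<Sum>f\<in>FF B. be B j f * (\<Sum>s\<in>SS A. al A i s * (xi B I f * xi A B T * xi I A s) $$ (0,0)))"
    by (rule bil[OF xFF_carrier xT xSS_carrier])
  also have "\<dots> = (\<Sum>f\<in>FF B. be B j f * (\<Sum>s\<in>SS A. al A i s * (f * T * s) $$ (0,0)))"
    by (intro sum.cong refl arg_cong2[where f="(*)"]) (simp add: scal_eq[OF FF_proc T SS_proc])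
  also have "\<dots> = (gc 1 (sdim B) (FF B) (be B j) (\<lambda>m. m) * T * gc (sdim A) 1 (SS A) (al A i) (\<lambda>m. m)) $$ (0,0)"
    by (rule bil[OF FF_carrier Tc SS_carrier, symmetric])
  also have "\<dots> = (urow (sdim B) j * T * ucol (sdim A) i) $$ (0,0)"
    by (simp only: SS_span[OF i] FF_span[OF j])
  also have "\<dots> = T $$ (j,i)" by (rule urow_ucol[OF Tc j i])
  finally show "(chi_inv B * xi A B T * chi A) $$ (j,i) = T $$ (j,i)" .
qed (use proc_carrier[OF assms] in auto)

lemma inv1: "chi_inv A * chi A = 1\<^sub>m (sdim A)"
proof -
  have "chi_inv A * xi A A (1\<^sub>m (sdim A)) * chi A = 1\<^sub>m (sdim A)" by (rule sandwich_T[OF proc_id])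
  thus ?thesis by (simp add: xi_id)
qed

lemma u_dims: "dim_row (u A) = 1" "dim_col (u A) = sdim A"
proof -
  have "u A \<in> carrier_mat (sdim I) (sdim A)" by (rule proc_carrier[OF u_proc])
  thus "dim_row (u A) = 1" "dim_col (u A) = sdim A" unfolding sdimI by auto
qed

lemma ones_chi: "ones_row (n A) * chi A = u A"
proof (rule eq_matI)
  have uc: "u A \<in> carrier_mat 1 (sdim A)" using proc_carrier[OF u_proc] sdimI by metis
  have oc: "ones_row (n A) \<in> carrier_mat 1 (n A)" by (simp add: ones_row_def)
  fix j i assume ji: "j < dim_row (u A)" "i < dim_col (u A)"
  have j: "j = 0" and i: "i < sdim A" using ji uc by auto
  have "(ones_row (n A) * chi A) $$ (0,i) = (ones_row (n A) * gc (n A) 1 (SS A) (al A i) (xi I A)) $$ (0,0)"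
    by (rule row_chiM[OF oc i])
  also have "\<dots> = gc 1 1 (SS A) (al A i) (\<lambda>s. xi A I (u A) * xi I A s) $$ (0,0)"
    by (subst gc_mult_left[OF oc xSS_carrier]) (simp_all add: xi_u)
  also have "\<dots> = gc 1 1 (SS A) (al A i) (\<lambda>s. u A * s) $$ (0,0)"
  proof -
    have "xi A I (u A) * xi I A s = u A * s" if "s \<in> SS A" for s
      using scal_eq[OF u_proc proc_id SS_proc[OF that]] xi_id right_mult_one_mat[OF proc_carrier[OF u_proc]]
        right_mult_one_mat[OF xi_carrier[OF u_proc]] by simp
    thus ?thesis by (simp cong: gc_cong)
  qed
  also have "\<dots> = (u A * gc (sdim A) 1 (SS A) (al A i) (\<lambda>m. m)) $$ (0,0)"
    by (subst gc_mult_left[OF uc SS_carrier]) simp_all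
  also have "\<dots> = (u A * ucol (sdim A) i) $$ (0,0)" by (simp only: SS_span[OF i])
  also have "\<dots> = u A $$ (0,i)" using uc i by (simp add: ucol_def scalar_prod_def ifm sum.delta)
  finally show "(ones_row (n A) * chi A) $$ (j,i) = u A $$ (j,i)" using j by simp
qed (simp_all add: ones_row_def u_dims)

end


context omd begin

lemma prod_entry:
  assumes s: "s \<in> carrier_mat p 1" and f: "f \<in> carrier_mat 1 q" and l: "l < p" and l': "l' < q"
  shows "(s * f) $$ (l,l') = s $$ (l,0) * f $$ (0,l')"
  using mult_entry[OF s f l l'] by simp

lemma inv2: "chi A * chi_inv A = 1\<^sub>m (n A)"
proof (cases "sdim A = 0")
  case True
  have "n A = 0" by (rule xi_dzero[OF True])
  then show ?thesis by (intro eq_matI) auto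
next
  case False
  define d where "d = sdim A"
  define S where "S = SS A"
  define F where "F = FF A"
  define X where "X = S \<times> F"
  define c where "c = (\<lambda>(s,f). \<Sum>i<d. al A i s * be A i f)"
  define G where "G = (\<lambda>(s::real mat, f::real mat). s * f)"
  have d0: "0 < d" using False d_def by simp
  have finX: "finite X" using SS_fin FF_fin by (simp add: X_def S_def F_def)
  have GX: "\<And>x. x \<in> X \<Longrightarrow> G x \<in> proc A A"
    by (auto simp: X_def G_def S_def F_def intro!: proc_comp SS_proc FF_proc)
  have ucol_e: "\<And>i l. i < d \<Longrightarrow> l < d \<Longrightarrow> (\<Sum>s\<in>S. al A i s * s $$ (l,0)) = (if l = i then 1 else 0)"
  proof -
    fix i l assume il: "i < d" "l < d"
    have "gc d 1 S (al A i) (\<lambda>m. m) $$ (l,0) = ucol d i $$ (l,0)" using SS_span[of i A] il by (simp add: d_def S_def)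
    thus "(\<Sum>s\<in>S. al A i s * s $$ (l,0)) = (if l = i then 1 else 0)" using il by (simp add: ucol_def)
  qed
  have urow_e: "\<And>i l. i < d \<Longrightarrow> l < d \<Longrightarrow> (\<Sum>f\<in>F. be A i f * f $$ (0,l)) = (if l = i then 1 else 0)"
  proof -
    fix i l assume il: "i < d" "l < d"
    have "gc 1 d F (be A i) (\<lambda>m. m) $$ (0,l) = urow d i $$ (0,l)" using FF_span[of i A] il by (simp add: d_def F_def)
    thus "(\<Sum>f\<in>F. be A i f * f $$ (0,l)) = (if l = i then 1 else 0)" using il by (simp add: urow_def)
  qed
  have one: "1\<^sub>m d = gc d d X c G"
  proof (rule eq_matI)
    fix l l' assume ll: "l < dim_row (gc d d X c G)" "l' < dim_col (gc d d X c G)"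
    have "gc d d X c G $$ (l,l') = (\<Sum>(s,f)\<in>S\<times>F. (\<Sum>i<d. al A i s * be A i f) * (s $$ (l,0) * f $$ (0,l')))"
      using ll unfolding X_def
      by (auto simp: c_def G_def S_def F_def d_def intro!: sum.cong prod_entry SS_carrier FF_carrier)
    also have "\<dots> = (\<Sum>i<d. (\<Sum>s\<in>S. al A i s * s $$ (l,0)) * (\<Sum>f\<in>F. be A i f * f $$ (0,l')))"
      by (rule sum_prod3)
    also have "\<dots> = (\<Sum>i<d. (if l = i then 1 else 0) * (if l' = i then 1 else 0))"
      using ll by (intro sum.cong refl) (simp add: ucol_e urow_e)
    also have "\<dots> = 1\<^sub>m d $$ (l,l')" using ll by (simp add: ifm sum.delta)
    finally show "1\<^sub>m d $$ (l,l') = gc d d X c G $$ (l,l')" by simp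
  qed auto
  have two: "chi A * chi_inv A = gc (n A) (n A) X c (\<lambda>x. xi A A (G x))"
  proof (rule eq_matI)
    fix r r' assume rr: "r < dim_row (gc (n A) (n A) X c (\<lambda>x. xi A A (G x)))" "r' < dim_col (gc (n A) (n A) X c (\<lambda>x. xi A A (G x)))"
    have xG: "xi A A (G (s,f)) = xi I A s * xi A I f" if "s \<in> S" "f \<in> F" for s f
      using xi_comp[OF SS_proc FF_proc] that by (simp add: G_def S_def F_def)
    have "gc (n A) (n A) X c (\<lambda>x. xi A A (G x)) $$ (r,r') =
       (\<Sum>(s,f)\<in>S\<times>F. (\<Sum>i<d. al A i s * be A i f) * (xi I A s $$ (r,0) * xi A I f $$ (0,r')))"
      using rr unfolding X_def
      by (auto simp: c_def xG S_def F_def intro!: sum.cong prod_entry xSS_carrier xFF_carrier)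
    also have "\<dots> = (\<Sum>i<d. (\<Sum>s\<in>S. al A i s * xi I A s $$ (r,0)) * (\<Sum>f\<in>F. be A i f * xi A I f $$ (0,r')))"
      by (rule sum_prod3)
    also have "\<dots> = (chi A * chi_inv A) $$ (r,r')"
      using rr by (simp add: mult_entry[OF chi_carrier chi_inv_carrier] del: index_mult_mat)
        (simp add: chiM_def chiI_def d_def S_def F_def)
    finally show "(chi A * chi_inv A) $$ (r,r') = gc (n A) (n A) X c (\<lambda>x. xi A A (G x)) $$ (r,r')" by simp
  qed auto
  have cond: "sum c X = 1 \<or> (\<forall>q. 0 < q \<and> q \<le> 1 \<longrightarrow> scal q \<in> proc I I)"
  proof (cases "\<exists>p\<in>proc I I. p \<noteq> 1\<^sub>m 1")
    case True
    then obtain p where "p \<in> proc I I" "p \<noteq> 1\<^sub>m 1" by blast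
    then show ?thesis using all_scal by blast
  next
    case False
    hence all1: "\<And>p. p \<in> proc I I \<Longrightarrow> p = 1\<^sub>m 1" by blast
    have "S \<noteq> {}"
    proof
      assume "S = {}"
      hence "gc d 1 S (al A 0) (\<lambda>m. m) $$ (0,0) = 0" using d0 by simp
      moreover have "gc d 1 S (al A 0) (\<lambda>m. m) $$ (0,0) = 1"
        using SS_span[of 0 A] d0 by (simp add: d_def S_def ucol_def)
      ultimately show False by simp
    qed
    then obtain s0 where s0: "s0 \<in> S" by blast
    have s0p: "s0 \<in> proc I A" using SS_proc[of s0 A] s0 unfolding S_def by blast
    have s0c: "s0 \<in> carrier_mat d 1" using SS_carrier[of s0 A] s0 unfolding S_def d_def by blast
    have uc: "u A \<in> carrier_mat 1 d" unfolding d_def carrier_mat_def using u_dims[of A] by simp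
    have Gc: "\<And>x. x \<in> X \<Longrightarrow> G x \<in> carrier_mat d d" using GX proc_carrier by (simp add: d_def)
    have "(u A * 1\<^sub>m d * s0) $$ (0,0) = (u A * s0) $$ (0,0)" using uc by simp
    also have "\<dots> = 1" using all1[OF proc_comp[OF u_proc s0p]] by simp
    finally have l1: "(u A * 1\<^sub>m d * s0) $$ (0,0) = 1" .
    have e1: "u A * gc d d X c G = gc 1 d X c (\<lambda>x. u A * G x)" by (rule gc_mult_left[OF uc Gc])
    have uGc: "\<And>x. x \<in> X \<Longrightarrow> u A * G x \<in> carrier_mat 1 d" using uc Gc mult_carrier_mat by blast
    have e2: "gc 1 d X c (\<lambda>x. u A * G x) * s0 = gc 1 1 X c (\<lambda>x. u A * G x * s0)"
      by (rule gc_mult_right[OF s0c uGc])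
    have "u A * gc d d X c G * s0 = gc 1 1 X c (\<lambda>x. u A * G x * s0)" using e1 e2 by simp
    hence "(u A * gc d d X c G * s0) $$ (0,0) = (\<Sum>x\<in>X. c x * (u A * G x * s0) $$ (0,0))" by simp
    also have "\<dots> = (\<Sum>x\<in>X. c x)"
    proof (rule sum.cong[OF refl])
      fix x assume x: "x \<in> X"
      obtain s f where sf: "x = (s,f)" "s \<in> S" "f \<in> F" using x by (auto simp: X_def)
      have sp: "s \<in> proc I A" and fp: "f \<in> proc A I" using sf SS_proc FF_proc by (auto simp: S_def F_def)
      have sc: "s \<in> carrier_mat d 1" and fc: "f \<in> carrier_mat 1 d"
        using sf SS_carrier FF_carrier by (auto simp: S_def F_def d_def)
      have us: "u A * s \<in> carrier_mat 1 1" using uc sc by simp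
      have "u A * G x * s0 = (u A * s) * f * s0"
        using sf assoc_mult_mat[OF uc sc fc] by (simp add: G_def)
      also have "\<dots> = (u A * s) * (f * s0)" by (rule assoc_mult_mat[OF us fc s0c])
      finally have "u A * G x * s0 = (u A * s) * (f * s0)" .
      also have "\<dots> = 1\<^sub>m 1 * 1\<^sub>m 1" using all1[OF proc_comp[OF u_proc sp]] all1[OF proc_comp[OF fp s0p]] by simp
      finally show "c x * (u A * G x * s0) $$ (0,0) = c x" by simp
    qed
    finally have calc: "(u A * gc d d X c G * s0) $$ (0,0) = sum c X" .
    from l1 have "(u A * gc d d X c G * s0) $$ (0,0) = 1" unfolding one .
    with calc show ?thesis by linarith
  qed
  have Qe: "1\<^sub>m (sdim A) = gc (sdim A) (sdim A) X c G" using one unfolding d_def .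
  have "xi A A (1\<^sub>m (sdim A)) = gc (n A) (n A) X c (\<lambda>x. xi A A (G x))"
    using lin[OF finX _ proc_id Qe cond] GX by blast
  with two xi_id show ?thesis by simp
qed


lemma xiT:
  assumes T: "T \<in> proc A B"
  shows "xi A B T = chi B * T * chi_inv A"
proof -
  define M where "M = xi A B T"
  have Mc: "M \<in> carrier_mat (n B) (n A)" unfolding M_def by (rule xi_carrier[OF T])
  have IBM: "chi_inv B * M \<in> carrier_mat (sdim B) (n A)" by (rule mult_carrier_mat[OF chi_inv_carrier Mc])
  have h1: "chi B * (chi_inv B * M) = M"
  proof -
    have "chi B * (chi_inv B * M) = (chi B * chi_inv B) * M"
      by (rule assoc_mult_mat[OF chi_carrier chi_inv_carrier Mc, symmetric])
    also have "\<dots> = M" using inv2[of B] Mc by simp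
    finally show ?thesis .
  qed
  have h2: "(M * chi A) * chi_inv A = M"
  proof -
    have "(M * chi A) * chi_inv A = M * (chi A * chi_inv A)"
      by (rule assoc_mult_mat[OF Mc chi_carrier chi_inv_carrier])
    also have "\<dots> = M" using inv2[of A] Mc by simp
    finally show ?thesis .
  qed
  have "chi B * T * chi_inv A = chi B * (chi_inv B * M * chi A) * chi_inv A"
    using sandwich_T[OF T] by (simp add: M_def)
  also have "chi B * (chi_inv B * M * chi A) = (chi B * (chi_inv B * M)) * chi A"
    by (rule assoc_mult_mat[OF chi_carrier IBM chi_carrier, symmetric])
  also have "\<dots> = M * chi A" by (simp only: h1)
  finally show ?thesis using h2 by (simp add: M_def)
qed

lemma cone:
  assumes X: "X \<in> cone_of (sdim B) (sdim A) (proc A B)"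
  shows "chi B * X * chi_inv A \<in> cone_of (n B) (n A) {F. substoch (n A) (n B) F}"
proof -
  obtain K a M where K: "finite K" and aM: "\<forall>k\<in>K. 0 \<le> a k \<and> M k \<in> proc A B"
    and Xe: "X = lin_comb (sdim B) (sdim A) K a M"
    using X unfolding cone_of_def by blast
  have Mc: "\<And>k. k \<in> K \<Longrightarrow> M k \<in> carrier_mat (sdim B) (sdim A)" using aM proc_carrier by blast
  have CMc: "\<And>k. k \<in> K \<Longrightarrow> chi B * M k \<in> carrier_mat (n B) (sdim A)" by (rule mult_carrier_mat[OF chi_carrier Mc])
  have "chi B * X * chi_inv A = gc (n B) (sdim A) K a (\<lambda>k. chi B * M k) * chi_inv A"
    unfolding Xe lin_comb_gc by (simp only: gc_mult_left[OF chi_carrier Mc])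
  also have "\<dots> = gc (n B) (n A) K a (\<lambda>k. chi B * M k * chi_inv A)"
    by (rule gc_mult_right[OF chi_inv_carrier CMc])
  also have "\<dots> = gc (n B) (n A) K a (\<lambda>k. xi A B (M k))"
    by (rule gc_cong) (use aM xiT in auto)
  also have "\<dots> = lin_comb (n B) (n A) K a (\<lambda>k. xi A B (M k))" by (simp add: lin_comb_gc)
  finally have e: "chi B * X * chi_inv A = lin_comb (n B) (n A) K a (\<lambda>k. xi A B (M k))" .
  have "\<forall>k\<in>K. 0 \<le> a k \<and> xi A B (M k) \<in> {F. substoch (n A) (n B) F}" using aM xi_substoch by auto
  with K e show ?thesis unfolding cone_of_def by blast
qed

end


theorem proposition3:
  fixes sdim :: "'sys \<Rightarrow> nat" and tens :: "'sys \<Rightarrow> 'sys \<Rightarrow> 'sys" and I :: 'sys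
    and proc :: "'sys \<Rightarrow> 'sys \<Rightarrow> real mat set" and u :: "'sys \<Rightarrow> real mat"
    and n :: "'sys \<Rightarrow> nat" and xi :: "'sys \<Rightarrow> 'sys \<Rightarrow> real mat \<Rightarrow> real mat"
  assumes "tl_gpt sdim tens I proc u"
    and "ontological_model sdim tens I proc u n xi"
  shows "\<exists>chi chi_inv. \<forall>A.
     chi A \<in> carrier_mat (n A) (sdim A) \<and> chi_inv A \<in> carrier_mat (sdim A) (n A) \<and>
     chi_inv A * chi A = 1\<^sub>m (sdim A) \<and> chi A * chi_inv A = 1\<^sub>m (n A) \<and>
     (\<forall>B T. T \<in> proc A B \<longrightarrow> xi A B T = chi B * T * chi_inv A) \<and>
     ones_row (n A) * chi A = u A \<and>
     (\<forall>B. \<forall>X \<in> cone_of (sdim B) (sdim A) (proc A B).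
        chi B * X * chi_inv A \<in> cone_of (n B) (n A) {F. substoch (n A) (n B) F})"
proof -
  interpret om sdim tens I proc u n xi using assms by (rule om.intro)
  have "\<forall>A. \<exists>t. finite (fst t) \<and> fst t \<subseteq> proc I A \<and>
      (\<forall>i<sdim A. gc (sdim A) 1 (fst t) (fst (snd t) i) (\<lambda>m. m) = ucol (sdim A) i) \<and>
      finite (fst (snd (snd t))) \<and> fst (snd (snd t)) \<subseteq> proc A I \<and>
      (\<forall>j<sdim A. gc 1 (sdim A) (fst (snd (snd t))) (snd (snd (snd t)) j) (\<lambda>m. m) = urow (sdim A) j)"
  proof
    fix A
    obtain S al F be where "finite S \<and> S \<subseteq> proc I A \<and> (\<forall>i<sdim A. gc (sdim A) 1 S (al i) (\<lambda>m. m) = ucol (sdim A) i) \<and>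
     finite F \<and> F \<subseteq> proc A I \<and> (\<forall>j<sdim A. gc 1 (sdim A) F (be j) (\<lambda>m. m) = urow (sdim A) j)"
      using spanning[of A] by blast
    then show "\<exists>t. finite (fst t) \<and> fst t \<subseteq> proc I A \<and>
      (\<forall>i<sdim A. gc (sdim A) 1 (fst t) (fst (snd t) i) (\<lambda>m. m) = ucol (sdim A) i) \<and>
      finite (fst (snd (snd t))) \<and> fst (snd (snd t)) \<subseteq> proc A I \<and>
      (\<forall>j<sdim A. gc 1 (sdim A) (fst (snd (snd t))) (snd (snd (snd t)) j) (\<lambda>m. m) = urow (sdim A) j)"
      by (intro exI[of _ "(S, al, F, be)"]) simp
  qed
  from choice[OF this] obtain t where t: "\<forall>A. finite (fst (t A)) \<and> fst (t A) \<subseteq> proc I A \<and>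
      (\<forall>i<sdim A. gc (sdim A) 1 (fst (t A)) (fst (snd (t A)) i) (\<lambda>m. m) = ucol (sdim A) i) \<and>
      finite (fst (snd (snd (t A)))) \<and> fst (snd (snd (t A))) \<subseteq> proc A I \<and>
      (\<forall>j<sdim A. gc 1 (sdim A) (fst (snd (snd (t A)))) (snd (snd (snd (t A))) j) (\<lambda>m. m) = urow (sdim A) j)"
    by blast
  define SS where "SS A = fst (t A)" for A
  define al where "al A = fst (snd (t A))" for A
  define FF where "FF A = fst (snd (snd (t A)))" for A
  define be where "be A = snd (snd (snd (t A)))" for A
  have "omd sdim tens I proc u n xi SS al FF be"
    unfolding omd_def omd_axioms_def om_def SS_def al_def FF_def be_def using assms t by blast
  then interpret omd sdim tens I proc u n xi SS al FF be .
  have main: "\<forall>A.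
     chi A \<in> carrier_mat (n A) (sdim A) \<and> chi_inv A \<in> carrier_mat (sdim A) (n A) \<and>
     chi_inv A * chi A = 1\<^sub>m (sdim A) \<and> chi A * chi_inv A = 1\<^sub>m (n A) \<and>
     (\<forall>B T. T \<in> proc A B \<longrightarrow> xi A B T = chi B * T * chi_inv A) \<and>
     ones_row (n A) * chi A = u A \<and>
     (\<forall>B. \<forall>X \<in> cone_of (sdim B) (sdim A) (proc A B).
        chi B * X * chi_inv A \<in> cone_of (n B) (n A) {F. substoch (n A) (n B) F})"
    using chi_carrier chi_inv_carrier inv1 inv2 xiT ones_chi cone by blast
  show ?thesis by (rule exI, rule exI, rule main)
qed

end
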